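(* Let $(\phi,\psi)$ be a $q\times q$ Nevanlinna pair. Then there exists a discrete subset $\mathcal D$ of $\Pi_+$ such that $\phi$ and $\psi$ are holomorphic in $\Pi_+\setminus\mathcal D$ and, for all $w,z\in\Pi_+\setminus\mathcal D$, $\mathcal R(\phi(w))=\mathcal R(\phi(z))$, $\mathcal R(\psi(w))=\mathcal R(\psi(z))$, $\psi(w)\mathcal N(\phi(w))=\psi(z)\mathcal N(\phi(z))$, and $\phi(w)\mathcal N(\psi(w))=\phi(z)\mathcal N(\psi(z))$.
   Context: $\Pi_+:=\{z:\operatorname{Im}z>0\}$; $J_q:=\begin{pmatrix}0&-iI_q\\ iI_q&0\end{pmatrix}$; $\mathcal R$, $\mathcal N$ denote column space and null space. A pair $(\phi,\psi)$ of $q\times q$ matrix-valued functions meromorphic in $\Pi_+$ is a $q\times q$ Nevanlinna pair if there is a discrete subset $\mathcal D$ of $\Pi_+$ such that $\phi,\psi$ are holomorphic in $\Pi_+\setminus\mathcal D$, $\operatorname{rank}\begin{pmatrix}\phi(w)\\\psi(w)\end{pmatrix}=q$ and $\begin{pmatrix}\phi(w)\\\psi(w)\end{pmatrix}^*(-J_q)\begin{pmatrix}\phi(w)\\\psi(w)\end{pmatrix}$ is positive semidefinite for all $w\in\Pi_+\setminus\mathcal D$. *)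

theory Defs
  imports "HOL-Complex_Analysis.Complex_Analysis"
begin

definition upper_half_plane :: "complex set" where
  "upper_half_plane = {z. Im z > 0}"

definition discrete_in :: "complex set \<Rightarrow> complex set \<Rightarrow> bool" where
  "discrete_in D S \<longleftrightarrow> D \<subseteq> S \<and> D sparse_in S"

definition mat_meromorphic_on :: "(complex \<Rightarrow> complex^'q::finite^'q) \<Rightarrow> complex set \<Rightarrow> bool" where
  "mat_meromorphic_on F S \<longleftrightarrow> (\<forall>i j. (\<lambda>z. F z $ i $ j) meromorphic_on S)"

definition mat_holomorphic_on :: "(complex \<Rightarrow> complex^'q::finite^'q) \<Rightarrow> complex set \<Rightarrow> bool" where
  "mat_holomorphic_on F S \<longleftrightarrow> (\<forall>i j. (\<lambda>z. F z $ i $ j) holomorphic_on S)"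

definition adjoint_mat :: "complex^'n::finite^'m::finite \<Rightarrow> complex^'m^'n" where
  "adjoint_mat A = (\<chi> i j. cnj (A $ j $ i))"

definition psd_mat :: "complex^'n::finite^'n \<Rightarrow> bool" where
  "psd_mat M \<longleftrightarrow> (\<forall>v. (\<Sum>i\<in>UNIV. cnj (v $ i) * (M *v v) $ i) \<in> \<real> \<and>
                        Re (\<Sum>i\<in>UNIV. cnj (v $ i) * (M *v v) $ i) \<ge> 0)"

definition stack_mat :: "complex^'q::finite^'q \<Rightarrow> complex^'q::finite^'q \<Rightarrow> complex^'q^('q + 'q)" where
  "stack_mat A B = (\<chi> r. case r of Inl i \<Rightarrow> A $ i | Inr i \<Rightarrow> B $ i)"

text \<open>J_q = [[0, -i I_q], [i I_q, 0]] indexed by 'q + 'q.\<close>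
definition J_mat :: "complex^('q::finite + 'q)^('q + 'q)" where
  "J_mat = (\<chi> r s. case (r, s) of
       (Inl i, Inr j) \<Rightarrow> (if i = j then - \<i> else 0)
     | (Inr i, Inl j) \<Rightarrow> (if i = j then \<i> else 0)
     | _ \<Rightarrow> 0)"

definition nevanlinna_pair :: "(complex \<Rightarrow> complex^'q::finite^'q) \<Rightarrow> (complex \<Rightarrow> complex^'q::finite^'q) \<Rightarrow> bool" where
  "nevanlinna_pair \<phi> \<psi> \<longleftrightarrow>
     mat_meromorphic_on \<phi> upper_half_plane \<and> mat_meromorphic_on \<psi> upper_half_plane \<and>
     (\<exists>D. discrete_in D upper_half_plane \<and>
          mat_holomorphic_on \<phi> (upper_half_plane - D) \<and>
          mat_holomorphic_on \<psi> (upper_half_plane - D) \<and>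
          (\<forall>w \<in> upper_half_plane - D.
             rank (stack_mat (\<phi> w) (\<psi> w)) = CARD('q) \<and>
             psd_mat (adjoint_mat (stack_mat (\<phi> w) (\<psi> w)) ** (- J_mat) ** stack_mat (\<phi> w) (\<psi> w))))"

definition col_space :: "complex^'n::finite^'m::finite \<Rightarrow> (complex^'m) set" where
  "col_space A = range (\<lambda>x. A *v x)"

definition null_space :: "complex^'n::finite^'m::finite \<Rightarrow> (complex^'n) set" where
  "null_space A = {x. A *v x = 0}"

end

theory Submission
  imports Defs
begin


no_notation fps_nth (infixl \<open>$\<close> 75)


definition cinner :: "complex^'n::finite \<Rightarrow> complex^'n \<Rightarrow> complex" where
  "cinner a b = (\<Sum>i\<in>UNIV. cnj (a$i) * b$i)"

lemma rank_full_inj: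
  fixes A :: "complex^'n::finite^'m::finite"
  assumes "rank A = CARD('n)" "A *v x = 0"
  shows "x = 0"
proof -
  have "vec.span (rows A) = UNIV"
    using assms(1) vec.dim_eq_full[of "rows A"] unfolding row_rank_def_gen
    by (simp add: vec_dim_card vec.dimension_def card_cart_basis)
  then have "inj ((*v) A)"
    using matrix_left_invertible_span_rows_gen matrix_left_invertible_injective by blast
  then show ?thesis using assms(2)
    by (metis injD matrix_vector_mult_0_right)
qed

lemma open_uhp: "open upper_half_plane" and connected_uhp: "connected upper_half_plane"
  unfolding upper_half_plane_def
  by (auto simp: open_halfspace_Im_gt convex_halfspace_Im_gt convex_connected)



lemma sum_UNIV_plus:
  "sum f (UNIV::('a::finite+'b::finite) set) = sum (\<lambda>i. f (Inl i)) UNIV + sum (\<lambda>i. f (Inr i)) UNIV"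
  using sum.Plus[of "UNIV::'a set" "UNIV::'b set" f] by (simp add: comp_def)

lemma cinner_add_left: "cinner (a + b) c = cinner a c + cinner b c"
  by (simp add: cinner_def sum.distrib distrib_right)
lemma cinner_add_right: "cinner c (a + b) = cinner c a + cinner c b"
  by (simp add: cinner_def sum.distrib distrib_left)
lemma cinner_diff_left: "cinner (a - b) c = cinner a c - cinner b c"
  by (simp add: cinner_def sum_subtractf left_diff_distrib)
lemma cinner_diff_right: "cinner c (a - b) = cinner c a - cinner c b"
  by (simp add: cinner_def sum_subtractf right_diff_distrib)
lemma cinner_scale_left: "cinner (k *s a) c = cnj k * cinner a c"
  by (simp add: cinner_def sum_distrib_left mult.assoc)
lemma cinner_scale_right: "cinner c (k *s a) = k * cinner c a"
  by (simp add: cinner_def sum_distrib_left mult.left_commute)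
lemma cinner_minus_left: "cinner (- a) c = - cinner a c"
  by (simp add: cinner_def sum_negf)
lemma cinner_minus_right: "cinner c (- a) = - cinner c a"
  by (simp add: cinner_def sum_negf)
lemma cinner_zero_left[simp]: "cinner 0 c = 0" and cinner_zero_right[simp]: "cinner c 0 = 0"
  by (simp_all add: cinner_def)
lemma cinner_commute: "cinner b a = cnj (cinner a b)"
  by (simp add: cinner_def mult.commute)
lemma Re_cinner: "Re (cinner a b) = inner a b"
  by (simp add: cinner_def inner_vec_def inner_complex_def Re_sum)
lemma Im_cinner_self: "Im (cinner a a) = 0"
  by (simp add: cinner_def Im_sum)
lemma cinner_self: "cinner a a = complex_of_real ((norm a)\<^sup>2)"
  by (simp add: complex_eq_iff Re_cinner Im_cinner_self power2_norm_eq_inner)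
lemma cinner_self_eq_0: "cinner a a = 0 \<longleftrightarrow> a = 0"
  by (simp add: cinner_self)

lemmas cinner_simps = cinner_add_left cinner_add_right cinner_diff_left cinner_diff_right
  cinner_scale_left cinner_scale_right cinner_minus_left cinner_minus_right

lemma norm_sq_Re: "(norm a)\<^sup>2 = Re (cinner a a)"
  by (simp add: cinner_self)

lemma cinner_adjoint:
  fixes S :: "complex^'n::finite^'m::finite"
  shows "cinner v (adjoint_mat S *v y) = cinner (S *v v) y"
  by (simp add: cinner_def adjoint_mat_def matrix_vector_mult_def sum_distrib_left
      sum_distrib_right sum.swap[of _ "UNIV::'m set"] mult_ac)

lemma norm_scale_unit:
  fixes v :: "complex^'n::finite"
  assumes "cmod c = 1"
  shows "norm (c *s v) = norm v"
proof -
  have "(norm (c *s v))\<^sup>2 = (norm v)\<^sup>2"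
    unfolding norm_sq_Re cinner_simps
    by (metis (no_types, lifting) Re_complex_of_real assms complex_norm_square mult.assoc
        mult.commute mult_1 norm_one of_real_1 power2_eq_square)
  then show ?thesis by simp
qed

lemma cinner_CS:
  fixes u v :: "complex^'n::finite"
  shows "cmod (cinner u v) \<le> norm u * norm v"
proof (cases "cinner u v = 0")
  case True then show ?thesis by simp
next
  case False
  define s where "s = cinner u v"
  define c where "c = cnj s / complex_of_real (cmod s)"
  have c1: "cmod c = 1" using False by (simp add: c_def s_def norm_divide)
  have sq: "cnj s * s = (complex_of_real (cmod s))\<^sup>2"
    by (simp only: of_real_power[symmetric] complex_norm_square mult.commute)
  have "cinner u (c *s v) = c * s" by (simp add: cinner_scale_right s_def)
  also have "\<dots> = complex_of_real (cmod s)"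
  proof -
    have "s \<noteq> 0" using False s_def by simp
    have "c * s = cnj s * s / complex_of_real (cmod s)" by (simp add: c_def)
    also have "\<dots> = (complex_of_real (cmod s))\<^sup>2 / complex_of_real (cmod s)" by (simp only: sq)
    also have "\<dots> = complex_of_real (cmod s)" using \<open>s \<noteq> 0\<close> by (simp add: power2_eq_square)
    finally show ?thesis .
  qed
  finally have "cinner u (c *s v) = complex_of_real (cmod s)" .
  then have "cmod s = inner u (c *s v)"
    by (metis Re_cinner Re_complex_of_real)
  also have "\<dots> \<le> norm u * norm (c *s v)" by (rule norm_cauchy_schwarz)
  finally show ?thesis using norm_scale_unit[OF c1, of v] by (simp add: s_def)
qed



lemma stack_mv_Inl: "(stack_mat A B *v v) $ Inl i = (A *v v) $ i"
  and stack_mv_Inr: "(stack_mat A B *v v) $ Inr i = (B *v v) $ i"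
  by (simp_all add: stack_mat_def matrix_vector_mult_def)

lemma if_mult0: "(if P then a else 0) * b = (if P then a * b else (0::complex))" by simp

lemma J_mv_Inl: "((- J_mat) *v (y::complex^('q::finite+'q))) $ Inl i = \<i> * y $ Inr i"
  and J_mv_Inr: "((- J_mat) *v (y::complex^('q::finite+'q))) $ Inr i = - \<i> * y $ Inl i"
  by (simp_all add: J_mat_def matrix_vector_mult_def sum_UNIV_plus sum_negf if_mult0)

lemma psd_Im:
  fixes A B :: "complex^'q::finite^'q"
  assumes "psd_mat (adjoint_mat (stack_mat A B) ** (- J_mat) ** stack_mat A B)"
  shows "Im (cinner (A *v v) (B *v v)) \<le> 0"
proof -
  let ?S = "stack_mat A B"
  have "(\<Sum>i\<in>UNIV. cnj (v $ i) * ((adjoint_mat ?S ** (- J_mat) ** ?S) *v v) $ i)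
     = cinner v (adjoint_mat ?S *v ((- J_mat) *v (?S *v v)))"
    by (simp add: cinner_def matrix_vector_mul_assoc matrix_mul_assoc)
  also have "\<dots> = cinner (?S *v v) ((- J_mat) *v (?S *v v))" by (rule cinner_adjoint)
  also have "\<dots> = \<i> * cinner (A *v v) (B *v v) - \<i> * cinner (B *v v) (A *v v)"
    by (simp add: cinner_def sum_UNIV_plus stack_mv_Inl stack_mv_Inr J_mv_Inl J_mv_Inr
        sum_distrib_left sum_subtractf sum_negf mult_ac)
  finally have eq: "(\<Sum>i\<in>UNIV. cnj (v $ i) * ((adjoint_mat ?S ** (- J_mat) ** ?S) *v v) $ i) =
     \<i> * cinner (A *v v) (B *v v) - \<i> * cinner (B *v v) (A *v v)" .
  have "Re (\<Sum>i\<in>UNIV. cnj (v $ i) * ((adjoint_mat ?S ** (- J_mat) ** ?S) *v v) $ i) \<ge> 0"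
    using assms unfolding psd_mat_def by blast
  then show ?thesis unfolding eq
    by (subst (asm) cinner_commute[of "B *v v"]) simp
qed



definition npt :: "complex^'q::finite^'q \<Rightarrow> complex^'q^'q \<Rightarrow> bool" where
  "npt A B \<longleftrightarrow> (\<forall>x. A *v x = 0 \<and> B *v x = 0 \<longrightarrow> x = 0) \<and> (\<forall>x. Im (cinner (A *v x) (B *v x)) \<le> 0)"

definition Em :: "complex^'q::finite^'q \<Rightarrow> complex^'q^'q \<Rightarrow> complex^'q^'q" where
  "Em A B = (\<chi> i j. A$i$j + \<i> * B$i$j)"

lemma mv_scale: "(A::complex^'n::finite^'m::finite) *v (c *s x) = c *s (A *v x)"
  by (simp add: vec_eq_iff matrix_vector_mult_def sum_distrib_left mult_ac)

lemma mv_neg: "(- A::complex^'n::finite^'m::finite) *v x = - (A *v x)"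
  by (simp add: vec_eq_iff matrix_vector_mult_def sum_negf)

lemma mv_add: "(A::complex^'n::finite^'m::finite) *v (x + y) = A *v x + A *v y"
  by (simp add: matrix_vector_right_distrib)

lemma Em_mv: "Em A B *v x = A *v x + \<i> *s (B *v x)"
  by (simp add: vec_eq_iff Em_def matrix_vector_mult_def ring_distribs sum.distrib sum_distrib_left mult.assoc)

lemma npt_swap: assumes "npt A B" shows "npt B (- A)"
  unfolding npt_def mv_neg cinner_minus_right
proof (intro conjI allI impI)
  fix x assume "B *v x = 0 \<and> - (A *v x) = 0"
  then have "A *v x = 0" "B *v x = 0" by (auto simp: neg_equal_0_iff_equal)
  then show "x = 0" using assms unfolding npt_def by blast
next
  fix x
  have "Im (cinner (A *v x) (B *v x)) \<le> 0" using assms unfolding npt_def by blast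
  moreover have "cinner (B *v x) (A *v x) = cnj (cinner (A *v x) (B *v x))" by (rule cinner_commute)
  ultimately show "Im (- cinner (B *v x) (A *v x)) \<le> 0"
    by simp
qed

lemma npt_norm:
  assumes "npt A B"
  shows "Re (cinner (A *v x - \<i> *s (B *v x)) (A *v x - \<i> *s (B *v x)))
       \<le> Re (cinner (A *v x + \<i> *s (B *v x)) (A *v x + \<i> *s (B *v x)))"
proof -
  let ?a = "A *v x" and ?b = "B *v x"
  have "Im (cinner ?a ?b) \<le> 0" using assms unfolding npt_def by blast
  moreover have "cinner ?b ?a = cnj (cinner ?a ?b)" by (rule cinner_commute)
  ultimately show ?thesis
    by (simp add: cinner_simps)
qed



lemma vec_zero_from_pm:
  fixes a b :: "complex^'q::finite"
  assumes "a + \<i> *s b = 0" "a - \<i> *s b = 0"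
  shows "a = 0" "b = 0"
proof -
  have "\<forall>i. a$i + \<i> * b$i = 0 \<and> a$i - \<i> * b$i = 0" using assms by (simp add: vec_eq_iff)
  have gen: "x = 0 \<and> y = 0" if "x + \<i> * y = 0" "x - \<i> * y = 0" for x y :: complex
  proof -
    have "x = \<i> * y" using that(2) by simp
    then have "\<i> * y + \<i> * y = 0" using that(1) by simp
    then have "2 * (\<i> * y) = 0" by (simp only: mult_2)
    then have "y = 0" by simp
    then show ?thesis using \<open>x = \<i> * y\<close> by simp
  qed
  then have "\<forall>i. a$i = 0 \<and> b$i = 0"
    using \<open>\<forall>i. a$i + \<i> * b$i = 0 \<and> a$i - \<i> * b$i = 0\<close> by blast
  then show "a = 0" "b = 0" by (simp_all add: vec_eq_iff)
qed

lemma npt_Em_zero: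
  assumes "npt A B" "Em A B *v x = 0"
  shows "x = 0"
proof -
  have s: "A *v x + \<i> *s (B *v x) = 0" using assms(2) by (simp add: Em_mv)
  have "Re (cinner (A *v x - \<i> *s (B *v x)) (A *v x - \<i> *s (B *v x))) \<le> 0"
    using npt_norm[OF assms(1), of x] s by simp
  then have "(norm (A *v x - \<i> *s (B *v x)))\<^sup>2 \<le> 0" by (simp add: norm_sq_Re)
  then have d: "A *v x - \<i> *s (B *v x) = 0" by simp
  have "A *v x = 0" "B *v x = 0" using vec_zero_from_pm[OF s d] by auto
  then show ?thesis using assms(1) unfolding npt_def by blast
qed

lemma npt_det:
  assumes "npt A B"
  shows "det (Em A B) \<noteq> 0"
proof -
  have "inj ((*v) (Em A B))"
  proof (rule injI)
    fix x y assume "Em A B *v x = Em A B *v y"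
    then have "Em A B *v (x - y) = 0" by (simp add: matrix_vector_mult_diff_distrib)
    then show "x = y" using npt_Em_zero[OF assms, of "x - y"] by simp
  qed
  then show ?thesis
    using det_nz_iff_inj_gen[OF matrix_vector_mul_linear_gen[of "Em A B"]] by simp
qed

lemma npt_solve:
  assumes "npt A B"
  obtains x where "Em A B *v x = b"
  using cramer[OF npt_det[OF assms], of _ b] by blast



lemma cinner_zero_of_orth:
  fixes A :: "complex^'q::finite^'q"
  assumes "\<forall>v. inner (A *v v) y = 0"
  shows "cinner (A *v v) y = 0"
proof -
  have r: "Re (cinner (A *v v) y) = 0" using assms by (simp add: Re_cinner)
  have "Re (cinner (A *v (\<i> *s v)) y) = 0" using assms by (simp add: Re_cinner)
  then have "Im (cinner (A *v v) y) = 0" by (simp add: mv_scale cinner_scale_left)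
  with r show ?thesis by (simp add: complex_eq_iff)
qed

lemma npt_orth_sub1:
  assumes "npt A B" "A *v x0 = 0"
  shows "inner (A *v v) (B *v x0) = 0"
proof -
  define y where "y = B *v x0"
  define \<alpha> where "\<alpha> = cinner (A *v v) y"
  define \<beta> where "\<beta> = cinner (A *v v) (B *v v)"
  define n where "n = (cmod \<alpha>)\<^sup>2"
  define \<epsilon> where "\<epsilon> = 1 / (1 + \<bar>Im \<beta>\<bar>)"
  define t where "t = - \<i> * complex_of_real \<epsilon> * \<alpha>"
  have ep: "\<epsilon> > 0" by (simp add: \<epsilon>_def add_pos_nonneg)
  have "\<epsilon> * \<bar>Im \<beta>\<bar> < 1" unfolding \<epsilon>_def by (simp add: field_simps)
  then have pos: "1 + \<epsilon> * Im \<beta> > 0"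
  proof -
    have "- \<bar>Im \<beta>\<bar> \<le> Im \<beta>" by (simp add: abs_if)
    from mult_left_mono[OF this, of \<epsilon>] ep have "- (\<epsilon> * \<bar>Im \<beta>\<bar>) \<le> \<epsilon> * Im \<beta>" by simp
    with \<open>\<epsilon> * \<bar>Im \<beta>\<bar> < 1\<close> show ?thesis by linarith
  qed
  have na: "cnj \<alpha> * \<alpha> = complex_of_real n"
    unfolding n_def by (simp only: complex_norm_square mult.commute)
  have t1: "cnj t * \<alpha> = \<i> * complex_of_real (\<epsilon> * n)"
    by (simp add: t_def na[symmetric] mult_ac)
  have t2: "cnj t * t = complex_of_real (\<epsilon>\<^sup>2 * n)"
    by (simp add: t_def na[symmetric] mult_ac power2_eq_square)
  have "Im (cinner (A *v (x0 + t *s v)) (B *v (x0 + t *s v))) \<le> 0"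
    using assms(1) unfolding npt_def by blast
  moreover have "cinner (A *v (x0 + t *s v)) (B *v (x0 + t *s v))
      = cnj t * \<alpha> + cnj t * t * \<beta>"
  proof -
    have "A *v (x0 + t *s v) = t *s (A *v v)" by (simp add: mv_add mv_scale assms(2))
    moreover have "B *v (x0 + t *s v) = y + t *s (B *v v)" by (simp add: mv_add mv_scale y_def)
    ultimately show ?thesis
      by (simp add: cinner_scale_left cinner_add_right cinner_scale_right \<alpha>_def \<beta>_def
          distrib_left mult.assoc)
  qed
  ultimately have "\<epsilon> * n + \<epsilon>\<^sup>2 * n * Im \<beta> \<le> 0"
    by (simp add: t1 t2)
  then have "\<epsilon> * n * (1 + \<epsilon> * Im \<beta>) \<le> 0" by (simp add: algebra_simps power2_eq_square)
  moreover have "\<epsilon> * (1 + \<epsilon> * Im \<beta>) > 0" using ep pos by simp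
  ultimately have "n * (\<epsilon> * (1 + \<epsilon> * Im \<beta>)) \<le> 0" by (simp add: mult_ac)
  then have "n \<le> 0" using \<open>\<epsilon> * (1 + \<epsilon> * Im \<beta>) > 0\<close> ep pos
    by (simp add: mult_le_0_iff)
  then have "\<alpha> = 0" unfolding n_def by simp
  then show ?thesis by (metis Re_cinner \<alpha>_def y_def zero_complex.sel(1))
qed

lemma npt_orth_sub2:
  assumes "npt A B" "\<forall>v. inner (A *v v) y = 0"
  shows "y \<in> (\<lambda>x. B *v x) ` null_space A"
proof -
  obtain x where ex: "Em A B *v x = \<i> *s y" using npt_solve[OF assms(1)] by blast
  define a where "a = A *v x"
  have e: "a + \<i> *s (B *v x) = \<i> *s y" using ex by (simp add: Em_mv a_def)
  have ay: "cinner a y = 0" unfolding a_def using cinner_zero_of_orth[OF assms(2)] .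
  have ya: "cinner y a = 0" using ay by (subst cinner_commute) simp
  have g: "a - \<i> *s (B *v x) = (a + a) - \<i> *s y"
    using e by (metis add_diff_cancel_left' diff_diff_eq2)
  have "Re (cinner (a - \<i> *s (B *v x)) (a - \<i> *s (B *v x))) \<le> Re (cinner (\<i> *s y) (\<i> *s y))"
    using npt_norm[OF assms(1), of x] e unfolding a_def by simp
  then have "Re (cinner ((a + a) - \<i> *s y) ((a + a) - \<i> *s y)) \<le> Re (cinner (\<i> *s y) (\<i> *s y))"
    by (simp only: g)
  moreover have "cinner ((a + a) - \<i> *s y) ((a + a) - \<i> *s y) =
      4 * cinner a a + cinner (\<i> *s y) (\<i> *s y)"
    by (simp only: cinner_add_left cinner_add_right cinner_diff_left cinner_diff_right
        cinner_scale_left cinner_scale_right ay ya) simp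
  ultimately have "4 * Re (cinner a a) \<le> 0"
    by simp
  then have "(norm a)\<^sup>2 \<le> 0" by (simp add: norm_sq_Re)
  then have a0: "a = 0" by simp
  then have "\<i> *s (B *v x) = \<i> *s y" using e by simp
  then have "B *v x = y"
    by (metis (no_types, lifting) complex_i_not_zero vec_eq_iff vector_smult_component
        mult_cancel_left)
  moreover have "x \<in> null_space A" using a0 by (simp add: null_space_def a_def)
  ultimately show ?thesis by blast
qed

lemma npt_orth:
  assumes "npt A B"
  shows "orthogonal_comp (range (\<lambda>x. A *v x)) = (\<lambda>x. B *v x) ` null_space A"
proof
  show "orthogonal_comp (range (\<lambda>x. A *v x)) \<subseteq> (\<lambda>x. B *v x) ` null_space A"
    using npt_orth_sub2[OF assms] by (auto simp: orthogonal_comp_def orthogonal_def)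
  show "(\<lambda>x. B *v x) ` null_space A \<subseteq> orthogonal_comp (range (\<lambda>x. A *v x))"
    using npt_orth_sub1[OF assms] by (auto simp: orthogonal_comp_def orthogonal_def null_space_def)
qed

lemma col_space_eq_orth:
  assumes "npt A B"
  shows "col_space A = orthogonal_comp ((\<lambda>x. B *v x) ` null_space A)"
proof -
  have "linear (\<lambda>x. A *v x)"
    by (rule linearI) (simp_all add: vec_eq_iff matrix_vector_mult_def scaleR_sum_right
        distrib_left sum.distrib)
  then have "subspace (range (\<lambda>x. A *v x))" by (simp add: linear_subspace_image)
  then show ?thesis
    unfolding col_space_def npt_orth[OF assms, symmetric] by (simp add: orthogonal_comp_self)
qed



lemma hol_det:
  assumes "\<And>i j. (\<lambda>z. M z $ i $ j) holomorphic_on S"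
  shows "(\<lambda>z. det (M z :: complex^'n::finite^'n)) holomorphic_on S"
  unfolding det_def by (intro holomorphic_intros assms)

lemma hol_cramer_mat:
  assumes "\<And>i j. (\<lambda>z. M z $ i $ j) holomorphic_on S"
  shows "(\<lambda>z. (\<chi> i j. if j = k then u $ i else M z $ i $ j :: complex^'n::finite^'n) $ i $ j) holomorphic_on S"
  by (cases "j = k") (simp_all add: assms)

lemma core:
  fixes \<phi> \<psi> :: "complex \<Rightarrow> complex^'q::finite^'q"
  assumes S: "open S" "connected S"
    and hphi: "\<And>i j. (\<lambda>z. \<phi> z $ i $ j) holomorphic_on S"
    and hpsi: "\<And>i j. (\<lambda>z. \<psi> z $ i $ j) holomorphic_on S"
    and np: "\<And>z. z \<in> S \<Longrightarrow> npt (\<phi> z) (\<psi> z)"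
    and z0: "z0 \<in> S" and z1: "z1 \<in> S"
  shows "(\<lambda>x. \<phi> z0 *v x) ` null_space (\<psi> z0) \<subseteq> (\<lambda>x. \<phi> z1 *v x) ` null_space (\<psi> z1)"
proof
  fix u assume "u \<in> (\<lambda>x. \<phi> z0 *v x) ` null_space (\<psi> z0)"
  then obtain x0 where x0: "\<psi> z0 *v x0 = 0" and u: "u = \<phi> z0 *v x0"
    by (auto simp: null_space_def)
  define E where "E z = Em (\<phi> z) (\<psi> z)" for z
  have hE: "(\<lambda>z. E z $ i $ j) holomorphic_on S" for i j
    unfolding E_def Em_def by (simp add: hphi hpsi holomorphic_intros)
  have dnz: "det (E z) \<noteq> 0" if "z \<in> S" for z
    unfolding E_def using npt_det[OF np[OF that]] .
  define xf where "xf z = (\<chi> k. det (\<chi> i j. if j = k then u $ i else E z $ i $ j) / det (E z))" for z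
  have xf_sol: "E z *v xf z = u" if "z \<in> S" for z
    unfolding xf_def using cramer[OF dnz[OF that]] by blast
  have hxf: "(\<lambda>z. xf z $ k) holomorphic_on S" for k
    unfolding xf_def
    by (simp, intro holomorphic_intros hol_det hol_cramer_mat hE dnz)
  define g where "g z = cinner u (\<phi> z *v xf z - \<i> *s (\<psi> z *v xf z))" for z
  have g_eq: "g = (\<lambda>z. \<Sum>i\<in>UNIV. cnj (u $ i) *
       ((\<Sum>j\<in>UNIV. \<phi> z $ i $ j * xf z $ j) - \<i> * (\<Sum>j\<in>UNIV. \<psi> z $ i $ j * xf z $ j)))"
    by (simp add: fun_eq_iff g_def cinner_def matrix_vector_mult_def)
  have hg: "g holomorphic_on S"
    unfolding g_eq by (intro holomorphic_intros hphi hpsi hxf)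
  have xf0: "xf z0 = x0"
  proof -
    have "E z0 *v x0 = u" unfolding E_def by (simp add: Em_mv x0 u)
    then have "x0 = (\<chi> k. det (\<chi> i j. if j = k then u $ i else E z0 $ i $ j) / det (E z0))"
      using cramer[OF dnz[OF z0], where x=x0 and b=u] by simp
    then show ?thesis by (simp add: xf_def)
  qed
  have g0: "g z0 = cinner u u" by (simp add: g_def xf0 x0 u)
  have bound: "cmod (g z) \<le> cmod (g z0)" if "z \<in> S" for z
  proof -
    let ?w = "\<phi> z *v xf z - \<i> *s (\<psi> z *v xf z)"
    have Ex: "\<phi> z *v xf z + \<i> *s (\<psi> z *v xf z) = u"
      using xf_sol[OF that] by (simp add: E_def Em_mv)
    have "Re (cinner ?w ?w) \<le> Re (cinner u u)"
      using npt_norm[OF np[OF that], of "xf z"] unfolding Ex .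
    then have "(norm ?w)\<^sup>2 \<le> (norm u)\<^sup>2" by (simp only: norm_sq_Re)
    then have "norm ?w \<le> norm u" by (rule power2_le_imp_le) simp
    then have "norm u * norm ?w \<le> norm u * norm u" by (simp add: mult_left_mono)
    moreover have "cmod (g z) \<le> norm u * norm ?w" unfolding g_def by (rule cinner_CS)
    ultimately have "cmod (g z) \<le> norm u * norm u" by linarith
    moreover have "cmod (g z0) = norm u * norm u"
      unfolding g0 cinner_self by (simp add: power2_eq_square norm_mult)
    ultimately show ?thesis by simp
  qed
  have "g constant_on S"
    by (rule maximum_modulus_principle[OF hg S(1) S(2) S(1) order_refl z0 bound])
  then obtain c where "\<forall>z\<in>S. g z = c" unfolding constant_on_def by blast
  then have g1: "g z1 = cinner u u" using g0 z0 z1 by simp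
  define x where "x = xf z1"
  define w where "w = \<phi> z1 *v x - \<i> *s (\<psi> z1 *v x)"
  have Ex: "\<phi> z1 *v x + \<i> *s (\<psi> z1 *v x) = u"
    using xf_sol[OF z1] by (simp add: E_def Em_mv x_def)
  have uw: "cinner u w = cinner u u" using g1 by (simp add: g_def w_def x_def)
  have wu: "cinner w u = cinner u u" using uw by (subst cinner_commute) (simp add: cinner_self)
  have "Re (cinner w w) \<le> Re (cinner u u)"
    using npt_norm[OF np[OF z1], of x] unfolding Ex w_def .
  then have "Re (cinner (w - u) (w - u)) \<le> 0"
    by (simp add: cinner_simps uw wu)
  then have "(norm (w - u))\<^sup>2 \<le> 0" by (simp only: norm_sq_Re)
  then have "w = u" by simp
  then have "(\<phi> z1 *v x - u) + \<i> *s (\<psi> z1 *v x) = 0" "(\<phi> z1 *v x - u) - \<i> *s (\<psi> z1 *v x) = 0"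
    using Ex unfolding w_def by (metis add_diff_cancel_left' diff_add_cancel diff_diff_eq2 diff_self)+
  from vec_zero_from_pm[OF this] have "\<phi> z1 *v x = u" "\<psi> z1 *v x = 0" by simp_all
  then show "u \<in> (\<lambda>x. \<phi> z1 *v x) ` null_space (\<psi> z1)"
    by (auto simp: null_space_def)
qed



lemma null_space_neg: "null_space (- A) = null_space (A::complex^'n::finite^'m::finite)"
  by (simp add: null_space_def mv_neg)

lemma img_neg: "(\<lambda>x. (- A) *v x) ` N = uminus ` ((\<lambda>x. (A::complex^'n::finite^'m::finite) *v x) ` N)"
  by (simp add: image_image mv_neg)

theorem proposition10p4:
  fixes \<phi> \<psi> :: "complex \<Rightarrow> complex^'q^'q"
  assumes "nevanlinna_pair \<phi> \<psi>"
  shows "\<exists>D. discrete_in D upper_half_plane \<and>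
          mat_holomorphic_on \<phi> (upper_half_plane - D) \<and>
          mat_holomorphic_on \<psi> (upper_half_plane - D) \<and>
          (\<forall>w \<in> upper_half_plane - D. \<forall>z \<in> upper_half_plane - D.
             col_space (\<phi> w) = col_space (\<phi> z) \<and>
             col_space (\<psi> w) = col_space (\<psi> z) \<and>
             (\<lambda>x. \<psi> w *v x) ` null_space (\<phi> w) = (\<lambda>x. \<psi> z *v x) ` null_space (\<phi> z) \<and>
             (\<lambda>x. \<phi> w *v x) ` null_space (\<psi> w) = (\<lambda>x. \<phi> z *v x) ` null_space (\<psi> z))"
proof -
  obtain D where D: "discrete_in D upper_half_plane"
    and hphi: "mat_holomorphic_on \<phi> (upper_half_plane - D)"
    and hpsi: "mat_holomorphic_on \<psi> (upper_half_plane - D)"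
    and pt: "\<forall>w \<in> upper_half_plane - D.
             rank (stack_mat (\<phi> w) (\<psi> w)) = CARD('q) \<and>
             psd_mat (adjoint_mat (stack_mat (\<phi> w) (\<psi> w)) ** (- J_mat) ** stack_mat (\<phi> w) (\<psi> w))"
    using assms unfolding nevanlinna_pair_def by blast
  define S where "S = upper_half_plane - D"
  have sp: "D sparse_in upper_half_plane" using D unfolding discrete_in_def by blast
  have oS: "open S" unfolding S_def by (rule open_diff_sparse_pts[OF open_uhp sp])
  have cS: "connected S" unfolding S_def
    by (rule sparse_imp_connected[OF _ connected_uhp open_uhp sp]) simp
  have hphi': "\<And>i j. (\<lambda>z. \<phi> z $ i $ j) holomorphic_on S"
    using hphi unfolding mat_holomorphic_on_def S_def by blast
  have hpsi': "\<And>i j. (\<lambda>z. \<psi> z $ i $ j) holomorphic_on S"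
    using hpsi unfolding mat_holomorphic_on_def S_def by blast
  have hmphi: "\<And>i j. (\<lambda>z. (- \<phi> z) $ i $ j) holomorphic_on S"
    using hphi' by (simp add: holomorphic_on_minus)
  have np: "npt (\<phi> w) (\<psi> w)" if "w \<in> S" for w
    unfolding npt_def
  proof (intro conjI allI impI)
    fix x assume x: "\<phi> w *v x = 0 \<and> \<psi> w *v x = 0"
    have "stack_mat (\<phi> w) (\<psi> w) *v x = 0"
    proof (subst vec_eq_iff, rule allI)
      fix r show "(stack_mat (\<phi> w) (\<psi> w) *v x) $ r = 0 $ r"
        using x by (cases r) (simp_all add: stack_mv_Inl stack_mv_Inr)
    qed
    moreover have "rank (stack_mat (\<phi> w) (\<psi> w)) = CARD('q)"
      using pt that unfolding S_def by blast
    ultimately show "x = 0" using rank_full_inj by blast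
  next
    fix x show "Im (cinner (\<phi> w *v x) (\<psi> w *v x)) \<le> 0"
    proof (rule psd_Im)
      show "psd_mat (adjoint_mat (stack_mat (\<phi> w) (\<psi> w)) ** (- J_mat) ** stack_mat (\<phi> w) (\<psi> w))"
        using pt that unfolding S_def by blast
    qed
  qed
  have np2: "npt (\<psi> w) (- \<phi> w)" if "w \<in> S" for w
    using npt_swap[OF np[OF that]] .
  have A: "(\<lambda>x. \<phi> w *v x) ` null_space (\<psi> w) = (\<lambda>x. \<phi> z *v x) ` null_space (\<psi> z)"
    if "w \<in> S" "z \<in> S" for w z
    using core[OF oS cS hphi' hpsi' np that] core[OF oS cS hphi' hpsi' np that(2,1)] by blast
  have B: "(\<lambda>x. \<psi> w *v x) ` null_space (\<phi> w) = (\<lambda>x. \<psi> z *v x) ` null_space (\<phi> z)"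
    if "w \<in> S" "z \<in> S" for w z
    using core[OF oS cS hpsi' hmphi np2 that] core[OF oS cS hpsi' hmphi np2 that(2,1)]
    by (simp add: null_space_neg)
  have C: "col_space (\<phi> w) = col_space (\<phi> z)" if "w \<in> S" "z \<in> S" for w z
    using col_space_eq_orth[OF np[OF that(1)]] col_space_eq_orth[OF np[OF that(2)]] B[OF that]
    by simp
  have Dq: "col_space (\<psi> w) = col_space (\<psi> z)" if "w \<in> S" "z \<in> S" for w z
    using col_space_eq_orth[OF np2[OF that(1)]] col_space_eq_orth[OF np2[OF that(2)]] A[OF that]
    by (simp add: img_neg)
  show ?thesis
  proof (intro exI[of _ D] conjI ballI)
    fix w z assume "w \<in> upper_half_plane - D" "z \<in> upper_half_plane - D"
    then have wz: "w \<in> S" "z \<in> S" unfolding S_def by auto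
    show "col_space (\<phi> w) = col_space (\<phi> z)" by (rule C[OF wz])
    show "col_space (\<psi> w) = col_space (\<psi> z)" by (rule Dq[OF wz])
    show "(\<lambda>x. \<psi> w *v x) ` null_space (\<phi> w) = (\<lambda>x. \<psi> z *v x) ` null_space (\<phi> z)" by (rule B[OF wz])
    show "(\<lambda>x. \<phi> w *v x) ` null_space (\<psi> w) = (\<lambda>x. \<phi> z *v x) ` null_space (\<psi> z)" by (rule A[OF wz])
  qed (use D hphi hpsi in auto)
qed

end
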